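(* (Coinduction principle.) Let $\Sigma$ be a first-order signature, $\varphi(X_1,\ldots,X_m)$ a standard formula over $\Sigma$ with free relational variables among $X_1,\ldots,X_m$ and no free individual variables, and $\mathbb{A}$ a $\Sigma$-structure. Let $R_1,\ldots,R_m$ be coinductive relations on (the carrier of) $\mathbb{A}$ with arities matching those of $X_1,\ldots,X_m$, with approximants $R_i^\alpha$. Suppose that for every ordinal $\alpha$, if $\mathbb{A}\models\varphi(R_1^\alpha,\ldots,R_m^\alpha)$ then $\mathbb{A}\models\varphi(R_1^{\alpha+1},\ldots,R_m^{\alpha+1})$. Then $\mathbb{A}\models\varphi(R_1^\alpha,\ldots,R_m^\alpha)$ for every ordinal $\alpha$; in particular $\mathbb{A}\models\varphi(R_1,\ldots,R_m)$.
   Context: Formulas are first-order formulas over $\Sigma$ additionally allowing free (never bound) relational variables; quantification is only over individuals. A formula is standard if it is equivalent to a conjunction of formulas of the form $\forall x_1\ldots\forall x_n\big(\psi(x_1,\ldots,x_n,X_1,\ldots,X_m)\to X_{i_1}(t^1_1,\ldots,t^1_{n_1})\land\cdots\land X_{i_k}(t^k_1,\ldots,t^k_{n_k})\big)$ with $\psi$ quantifier-free and $t^j_l$ terms. An $n$-ary relation $R\subseteq A^n$ is coinductive if it is the greatest fixpoint of a (specified) monotone $F:\mathcal{P}(A^n)\to\mathcal{P}(A^n)$; its approximants (the final sequence of $F$) are $R^0=A^n$, $R^{\alpha+1}=F(R^\alpha)$, and $R^\lambda=\bigcap_{\alpha<\lambda}R^\alpha$ for limit ordinals $\lambda$. $\varphi(R_1,\ldots,R_m)$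 denotes $\varphi$ with each $X_i$ interpreted as $R_i$. *)

theory Defs
  imports Main
begin

text \<open>A signature is given by the types 'f (function/constant symbols) and
 'p (relation symbols) together with arity maps fa and pa.\<close>

datatype 'f trm = Var nat | Fn 'f "'f trm list"

datatype ('f, 'p) fm =
    FF
  | TT
  | Eq "'f trm" "'f trm"
  | Rel 'p "'f trm list"
  | RVar nat "'f trm list"
  | Neg "('f, 'p) fm"
  | Conj "('f, 'p) fm" "('f, 'p) fm"
  | Disj "('f, 'p) fm" "('f, 'p) fm"
  | Impl "('f, 'p) fm" "('f, 'p) fm"
  | All nat "('f, 'p) fm"
  | Ex nat "('f, 'p) fm"

fun wf_trm :: "('f \<Rightarrow> nat) \<Rightarrow> 'f trm \<Rightarrow> bool" where
  "wf_trm fa (Var x) = True"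
| "wf_trm fa (Fn f ts) = (length ts = fa f \<and> (\<forall>t\<in>set ts. wf_trm fa t))"

fun wf_fm :: "('f \<Rightarrow> nat) \<Rightarrow> ('p \<Rightarrow> nat) \<Rightarrow> ('f, 'p) fm \<Rightarrow> bool" where
  "wf_fm fa pa FF = True"
| "wf_fm fa pa TT = True"
| "wf_fm fa pa (Eq s t) = (wf_trm fa s \<and> wf_trm fa t)"
| "wf_fm fa pa (Rel p ts) = (length ts = pa p \<and> (\<forall>t\<in>set ts. wf_trm fa t))"
| "wf_fm fa pa (RVar i ts) = (\<forall>t\<in>set ts. wf_trm fa t)"
| "wf_fm fa pa (Neg A) = wf_fm fa pa A"
| "wf_fm fa pa (Conj A B) = (wf_fm fa pa A \<and> wf_fm fa pa B)"
| "wf_fm fa pa (Disj A B) = (wf_fm fa pa A \<and> wf_fm fa pa B)"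
| "wf_fm fa pa (Impl A B) = (wf_fm fa pa A \<and> wf_fm fa pa B)"
| "wf_fm fa pa (All x A) = wf_fm fa pa A"
| "wf_fm fa pa (Ex x A) = wf_fm fa pa A"

fun rvars_ok :: "nat \<Rightarrow> (nat \<Rightarrow> nat) \<Rightarrow> ('f, 'p) fm \<Rightarrow> bool" where
  "rvars_ok m ra (RVar i ts) = (i < m \<and> length ts = ra i)"
| "rvars_ok m ra (Neg A) = rvars_ok m ra A"
| "rvars_ok m ra (Conj A B) = (rvars_ok m ra A \<and> rvars_ok m ra B)"
| "rvars_ok m ra (Disj A B) = (rvars_ok m ra A \<and> rvars_ok m ra B)"
| "rvars_ok m ra (Impl A B) = (rvars_ok m ra A \<and> rvars_ok m ra B)"
| "rvars_ok m ra (All x A) = rvars_ok m ra A"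
| "rvars_ok m ra (Ex x A) = rvars_ok m ra A"
| "rvars_ok m ra _ = True"

fun fv_trm :: "'f trm \<Rightarrow> nat set" where
  "fv_trm (Var x) = {x}"
| "fv_trm (Fn f ts) = (\<Union>t\<in>set ts. fv_trm t)"

fun fv :: "('f, 'p) fm \<Rightarrow> nat set" where
  "fv FF = {}"
| "fv TT = {}"
| "fv (Eq s t) = fv_trm s \<union> fv_trm t"
| "fv (Rel p ts) = (\<Union>t\<in>set ts. fv_trm t)"
| "fv (RVar i ts) = (\<Union>t\<in>set ts. fv_trm t)"
| "fv (Neg A) = fv A"
| "fv (Conj A B) = fv A \<union> fv B"
| "fv (Disj A B) = fv A \<union> fv B"
| "fv (Impl A B) = fv A \<union> fv B"
| "fv (All x A) = fv A - {x}"
| "fv (Ex x A) = fv A - {x}"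

fun qfree :: "('f, 'p) fm \<Rightarrow> bool" where
  "qfree (All x A) = False"
| "qfree (Ex x A) = False"
| "qfree (Neg A) = qfree A"
| "qfree (Conj A B) = (qfree A \<and> qfree B)"
| "qfree (Disj A B) = (qfree A \<and> qfree B)"
| "qfree (Impl A B) = (qfree A \<and> qfree B)"
| "qfree _ = True"

text \<open>A structure: carrier D, interpretation of function symbols FI and of
 relation symbols PI.\<close>
type_synonym ('a, 'f, 'p) struct = "'a set \<times> ('f \<Rightarrow> 'a list \<Rightarrow> 'a) \<times> ('p \<Rightarrow> 'a list \<Rightarrow> bool)"

definition is_structure :: "('f \<Rightarrow> nat) \<Rightarrow> ('a, 'f, 'p) struct \<Rightarrow> bool" where
  "is_structure fa S = (case S of (D, FI, PI) \<Rightarrow>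
     D \<noteq> {} \<and> (\<forall>f as. length as = fa f \<and> set as \<subseteq> D \<longrightarrow> FI f as \<in> D))"

fun eval :: "('f \<Rightarrow> 'a list \<Rightarrow> 'a) \<Rightarrow> (nat \<Rightarrow> 'a) \<Rightarrow> 'f trm \<Rightarrow> 'a" where
  "eval FI e (Var x) = e x"
| "eval FI e (Fn f ts) = FI f (map (eval FI e) ts)"

fun sat :: "('a, 'f, 'p) struct \<Rightarrow> (nat \<Rightarrow> 'a list set) \<Rightarrow> (nat \<Rightarrow> 'a) \<Rightarrow> ('f, 'p) fm \<Rightarrow> bool" where
  "sat S Xs e FF = False"
| "sat S Xs e TT = True"
| "sat S Xs e (Eq s t) = (eval (fst (snd S)) e s = eval (fst (snd S)) e t)"
| "sat S Xs e (Rel p ts) = snd (snd S) p (map (eval (fst (snd S)) e) ts)"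
| "sat S Xs e (RVar i ts) = (map (eval (fst (snd S)) e) ts \<in> Xs i)"
| "sat S Xs e (Neg A) = (\<not> sat S Xs e A)"
| "sat S Xs e (Conj A B) = (sat S Xs e A \<and> sat S Xs e B)"
| "sat S Xs e (Disj A B) = (sat S Xs e A \<or> sat S Xs e B)"
| "sat S Xs e (Impl A B) = (sat S Xs e A \<longrightarrow> sat S Xs e B)"
| "sat S Xs e (All x A) = (\<forall>a\<in>fst S. sat S Xs (e(x := a)) A)"
| "sat S Xs e (Ex x A) = (\<exists>a\<in>fst S. sat S Xs (e(x := a)) A)"

text \<open>S |= A(Xs): truth under all assignments into the carrier (for a
 sentence this does not depend on the assignment).\<close>
definition models :: "('a, 'f, 'p) struct \<Rightarrow> (nat \<Rightarrow> 'a list set) \<Rightarrow> ('f, 'p) fm \<Rightarrow> bool" where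
  "models S Xs A = (\<forall>e. (\<forall>x. e x \<in> fst S) \<longrightarrow> sat S Xs e A)"

text \<open>A clause (xs, psi, hs) stands for
  forall xs. (psi --> X_{i_1}(ts_1) /\ ... /\ X_{i_k}(ts_k)),  hs = [(i_1,ts_1),...].\<close>

fun foralls :: "nat list \<Rightarrow> ('f, 'p) fm \<Rightarrow> ('f, 'p) fm" where
  "foralls [] A = A"
| "foralls (x # xs) A = All x (foralls xs A)"

definition conjs :: "('f, 'p) fm list \<Rightarrow> ('f, 'p) fm" where
  "conjs As = foldr Conj As TT"

definition clause_fm :: "nat list \<times> ('f, 'p) fm \<times> (nat \<times> 'f trm list) list \<Rightarrow> ('f, 'p) fm" where
  "clause_fm c = (case c of (xs, psi, hs) \<Rightarrow>
     foralls xs (Impl psi (conjs (map (\<lambda>(i, ts). RVar i ts) hs))))"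

definition std_clause :: "('f \<Rightarrow> nat) \<Rightarrow> ('p \<Rightarrow> nat) \<Rightarrow> nat list \<times> ('f, 'p) fm \<times> (nat \<times> 'f trm list) list \<Rightarrow> bool" where
  "std_clause fa pa c = (case c of (xs, psi, hs) \<Rightarrow>
     qfree psi \<and> wf_fm fa pa psi \<and> (\<forall>(i, ts)\<in>set hs. \<forall>t\<in>set ts. wf_trm fa t))"

definition equivalent :: "('f \<Rightarrow> nat) \<Rightarrow> ('f, 'p) fm \<Rightarrow> ('f, 'p) fm \<Rightarrow> 'a itself \<Rightarrow> bool" where
  "equivalent fa A B _ = (\<forall>(S :: ('a, 'f, 'p) struct) Xs e. is_structure fa S \<longrightarrow> (\<forall>x. e x \<in> fst S) \<longrightarrow>
       (sat S Xs e A \<longleftrightarrow> sat S Xs e B))"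

definition standard :: "('f \<Rightarrow> nat) \<Rightarrow> ('p \<Rightarrow> nat) \<Rightarrow> ('f, 'p) fm \<Rightarrow> 'a itself \<Rightarrow> bool" where
  "standard fa pa A T = (\<exists>cs. (\<forall>c\<in>set cs. std_clause fa pa c) \<and>
       equivalent fa A (conjs (map clause_fm cs)) T)"

definition tuples :: "'a set \<Rightarrow> nat \<Rightarrow> 'a list set" where
  "tuples D n = {as. length as = n \<and> set as \<subseteq> D}"

definition monotone_op :: "'b set \<Rightarrow> ('b set \<Rightarrow> 'b set) \<Rightarrow> bool" where
  "monotone_op U F = ((\<forall>X. X \<subseteq> U \<longrightarrow> F X \<subseteq> U) \<and>
                      (\<forall>X Y. X \<subseteq> Y \<and> Y \<subseteq> U \<longrightarrow> F X \<subseteq> F Y))"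

definition gfp_on :: "'b set \<Rightarrow> ('b set \<Rightarrow> 'b set) \<Rightarrow> 'b set" where
  "gfp_on U F = \<Union>{X. X \<subseteq> U \<and> X \<subseteq> F X}"

text \<open>The simultaneous final sequence of the operators F_0,...,F_{m-1}
 (F_i acting on P(D^(ra i))).  approx D m ra F Y holds iff
 Y = (R_0^alpha, ..., R_{m-1}^alpha) (padded with empty sets) for some
 ordinal alpha: R^0 = D^n, R^(alpha+1) = F(R^alpha), and
 R^lambda = intersection of the earlier stages (intersection taken in P(D^n)).
 The three rules correspond exactly to the three clauses of the transfinite
 definition; since the sequence is decreasing, the intersection of any set of
 stages is again a stage.\<close>

definition approx_top :: "'a set \<Rightarrow> nat \<Rightarrow> (nat \<Rightarrow> nat) \<Rightarrow> nat \<Rightarrow> 'a list set" where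
  "approx_top D m ra = (\<lambda>i. if i < m then tuples D (ra i) else {})"

definition approx_succ :: "nat \<Rightarrow> (nat \<Rightarrow> 'a list set \<Rightarrow> 'a list set) \<Rightarrow> (nat \<Rightarrow> 'a list set) \<Rightarrow> nat \<Rightarrow> 'a list set" where
  "approx_succ m F Y = (\<lambda>i. if i < m then F i (Y i) else {})"

inductive approx :: "'a set \<Rightarrow> nat \<Rightarrow> (nat \<Rightarrow> nat) \<Rightarrow> (nat \<Rightarrow> 'a list set \<Rightarrow> 'a list set) \<Rightarrow> (nat \<Rightarrow> 'a list set) \<Rightarrow> bool"
  for D m ra F where
  approx_zero: "approx D m ra F (approx_top D m ra)"
| approx_step: "approx D m ra F Y \<Longrightarrow> approx D m ra F (approx_succ m F Y)"
| approx_limit: "(\<forall>Y\<in>S. approx D m ra F Y) \<Longrightarrow>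
    approx D m ra F (\<lambda>i. if i < m then tuples D (ra i) \<inter> (\<Inter>Y\<in>S. Y i) else {})"

definition coinductive_tuple :: "'a set \<Rightarrow> nat \<Rightarrow> (nat \<Rightarrow> nat) \<Rightarrow> (nat \<Rightarrow> 'a list set \<Rightarrow> 'a list set) \<Rightarrow> nat \<Rightarrow> 'a list set" where
  "coinductive_tuple D m ra F = (\<lambda>i. if i < m then gfp_on (tuples D (ra i)) (F i) else {})"

end

theory Submission
  imports Defs
begin

inductive twr :: "'b::complete_lattice \<Rightarrow> ('b \<Rightarrow> 'b) \<Rightarrow> 'b \<Rightarrow> bool" for t f where
  twr_top: "twr t f t"
| twr_step: "twr t f x \<Longrightarrow> twr t f (f x)"
| twr_lim: "\<forall>x\<in>S. twr t f x \<Longrightarrow> twr t f (inf t (Inf S))"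

lemma twr_defl:
  assumes mono: "\<And>x y. x \<le> y \<Longrightarrow> y \<le> t \<Longrightarrow> f x \<le> f y"
    and ft: "\<And>x. x \<le> t \<Longrightarrow> f x \<le> t"
  shows "twr t f x \<Longrightarrow> x \<le> t \<and> f x \<le> x"
proof (induction rule: twr.induct)
  case twr_top
  then show ?case using ft by simp
next
  case (twr_step x)
  then show ?case using mono by (meson order_trans)
next
  case (twr_lim S)
  have 1: "inf t (Inf S) \<le> t" by simp
  have "f (inf t (Inf S)) \<le> Inf S"
  proof (rule Inf_greatest)
    fix Y assume Y: "Y \<in> S"
    have "inf t (Inf S) \<le> Y" using Y by (meson Inf_lower inf_le2 order_trans)
    hence "f (inf t (Inf S)) \<le> f Y" using mono twr_lim Y by blast
    also have "\<dots> \<le> Y" using twr_lim Y by blast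
    finally show "f (inf t (Inf S)) \<le> Y" .
  qed
  then show ?case using 1 ft by simp
qed

lemma twr_chain:
  assumes mono: "\<And>x y. x \<le> y \<Longrightarrow> y \<le> t \<Longrightarrow> f x \<le> f y"
    and ft: "\<And>x. x \<le> t \<Longrightarrow> f x \<le> t"
    and x: "twr t f x" and y: "twr t f y"
  shows "x \<le> y \<or> y \<le> x"
proof -
  have D: "\<And>x. twr t f x \<Longrightarrow> x \<le> t \<and> f x \<le> x" by (rule twr_defl[of t f, OF mono ft])
  define ext where "ext c = (\<forall>y. twr t f y \<longrightarrow> c < y \<longrightarrow> c \<le> f y)" for c
  have M: "c \<le> y \<or> y \<le> f c" if c: "twr t f c" "ext c" and y: "twr t f y" for c y
    using y
  proof (induction rule: twr.induct)
    case twr_top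
    then show ?case using D c by blast
  next
    case (twr_step y)
    show ?case
    proof (cases "c < y")
      case True then show ?thesis using c twr_step unfolding ext_def by blast
    next
      case False
      then have "c = y \<or> y \<le> f c" using twr_step by (meson order_less_le)
      then show ?thesis
        using D twr_step by (meson order_refl order_trans)
    qed
  next
    case (twr_lim S)
    show ?case
    proof (cases "\<forall>Y\<in>S. c \<le> Y")
      case True
      then show ?thesis using D c by (simp add: Inf_greatest)
    next
      case False
      then obtain Y where "Y \<in> S" "\<not> c \<le> Y" by blast
      then have "Y \<le> f c" using twr_lim by blast
      then show ?thesis using \<open>Y \<in> S\<close> by (meson Inf_lower inf_le2 order_trans)
    qed
  qed
  have E: "ext c" if "twr t f c" for c
    using that
  proof (induction rule: twr.induct)
    case twr_top
    then show ?case unfolding ext_def using D by (meson order.strict_iff_not)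
  next
    case (twr_step c)
    show ?case unfolding ext_def
    proof (intro allI impI)
      fix y assume ty: "twr t f y" and lt: "f c < y"
      from M[OF twr_step.hyps twr_step.IH ty] lt have "c \<le> y" by auto
      show "f c \<le> f y"
      proof (cases "c = y")
        case True then show ?thesis by simp
      next
        case False
        then have "c < y" using \<open>c \<le> y\<close> by simp
        then have "c \<le> f y" using twr_step.IH ty unfolding ext_def by blast
        then show ?thesis using D twr_step.hyps by (meson order_trans)
      qed
    qed
  next
    case (twr_lim S)
    let ?s = "inf t (Inf S)"
    show ?case unfolding ext_def
    proof (intro allI impI)
      fix y assume ty: "twr t f y" and lt: "?s < y"
      have "\<exists>c\<in>S. \<not> y \<le> f c"
      proof (rule ccontr)
        assume "\<not> ?thesis"
        then have "\<forall>c\<in>S. y \<le> c" using D twr_lim by (meson order_trans)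
        then have "y \<le> ?s" using D ty by (simp add: Inf_greatest)
        then show False using lt by (meson leD)
      qed
      then obtain c where cS: "c \<in> S" and nc: "\<not> y \<le> f c" by blast
      have tc: "twr t f c" and ec: "ext c" using twr_lim cS by auto
      have "c \<le> y" using M[OF tc ec ty] nc by blast
      show "?s \<le> f y"
      proof (cases "c = y")
        case False
        then have "c < y" using \<open>c \<le> y\<close> by simp
        then have "c \<le> f y" using ec ty unfolding ext_def by blast
        then show ?thesis using cS by (meson Inf_lower inf_le2 order_trans)
      next
        case True
        have "\<exists>c'\<in>S. \<not> c \<le> c'"
        proof (rule ccontr)
          assume "\<not> ?thesis"
          then have "c \<le> ?s" using D tc by (simp add: Inf_greatest)
          then show False using lt True by (meson leD)
        qed
        then obtain c' where c'S: "c' \<in> S" and nc': "\<not> c \<le> c'" by blast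
        have tc': "twr t f c'" and ec': "ext c'" using twr_lim c'S by auto
        have "c' \<le> c" using M[OF tc' ec' tc] nc' D tc' by (meson order_trans)
        then have "c' < c" using nc' by auto
        then have "c' \<le> f c" using ec' tc unfolding ext_def by blast
        then show ?thesis using c'S True by (meson Inf_lower inf_le2 order_trans)
      qed
    qed
  qed
  have "y \<le> f x \<or> x \<le> y" using M[OF x E[OF x] y] by blast
  then show ?thesis using D x by (meson order_trans)
qed

lemma eval_in:
  assumes "is_structure fa (D, FI, PI)" "\<forall>x. e x \<in> D"
  shows "wf_trm fa t \<Longrightarrow> eval FI e t \<in> D"
proof (induction t)
  case (Var x) then show ?case using assms by simp
next
  case (Fn f ts)
  have "set (map (eval FI e) ts) \<subseteq> D" using Fn by auto
  then show ?case using assms(1) Fn unfolding is_structure_def by simp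
qed

lemma sat_cong:
  assumes struct: "is_structure fa (D, FI, PI)"
    and XX: "\<forall>i<m. \<forall>as. length as = ra i \<and> set as \<subseteq> D \<longrightarrow> (as \<in> X i \<longleftrightarrow> as \<in> X' i)"
  shows "rvars_ok m ra A \<Longrightarrow> wf_fm fa pa A \<Longrightarrow> \<forall>x. e x \<in> D \<Longrightarrow>
     sat (D, FI, PI) X e A = sat (D, FI, PI) X' e A"
proof (induction A arbitrary: e)
  case (RVar i ts)
  have "set (map (eval FI e) ts) \<subseteq> D" using RVar eval_in[OF struct] by auto
  then show ?case using RVar XX by simp
next
  case (All x A)
  then show ?case by simp
next
  case (Ex x A)
  then show ?case by simp
qed auto

lemma sat_conjs: "sat S X e (conjs As) = (\<forall>A\<in>set As. sat S X e A)"
  by (induction As) (auto simp: conjs_def)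

lemma sat_heads: "sat S X e (conjs (map (\<lambda>(i, ts). RVar i ts) hs)) =
   (\<forall>(i,ts)\<in>set hs. map (eval (fst (snd S)) e) ts \<in> X i)"
  by (auto simp: sat_conjs)

lemma sat_univ_foralls:
  "sat S (\<lambda>_. UNIV) e (foralls xs (Impl \<psi> (conjs (map (\<lambda>(i, ts). RVar i ts) hs))))"
  by (induction xs arbitrary: e) (auto simp: sat_heads)

lemma sat_univ_clauses: "sat S (\<lambda>_. UNIV) e (conjs (map clause_fm cs))"
  by (auto simp: sat_conjs clause_fm_def sat_univ_foralls split: prod.splits)

lemma models_top:
  assumes struct: "is_structure fa (D, FI, PI)"
    and wf: "wf_fm fa pa \<phi>"
    and std: "standard fa pa \<phi> TYPE('a)"
    and rvars: "rvars_ok m ra \<phi>"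
  shows "models (D, FI, PI) (approx_top D m ra :: nat \<Rightarrow> 'a list set) \<phi>"
  unfolding models_def
proof (intro allI impI)
  fix e :: "nat \<Rightarrow> 'a" assume e: "\<forall>x. e x \<in> fst (D, FI, PI)"
  obtain cs where eq: "equivalent fa \<phi> (conjs (map clause_fm cs)) TYPE('a)"
    using std unfolding standard_def by blast
  have "sat (D, FI, PI) (\<lambda>_. UNIV) e \<phi>"
    using eq struct e sat_univ_clauses unfolding equivalent_def by blast
  moreover have "sat (D, FI, PI) (approx_top D m ra) e \<phi> = sat (D, FI, PI) (\<lambda>_. UNIV) e \<phi>"
    by (rule sat_cong[OF struct _ rvars wf]) (use e in \<open>auto simp: approx_top_def tuples_def\<close>)
  ultimately show "sat (D, FI, PI) (approx_top D m ra) e \<phi>" by simp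
qed

lemma stab:
  fixes S :: "(nat \<Rightarrow> 'a list set) set"
  assumes ne: "S \<noteq> {}" and ch: "\<forall>Y\<in>S. \<forall>Z\<in>S. Y \<le> Z \<or> Z \<le> Y"
  shows "qfree \<psi> \<Longrightarrow> \<exists>Y0\<in>S. \<forall>Y\<in>S. Y \<le> Y0 \<longrightarrow> (sat M Y e \<psi> = sat M (Inf S) e \<psi>)"
proof -
  have comb: "\<exists>Y0\<in>S. \<forall>Y\<in>S. Y \<le> Y0 \<longrightarrow> P Y \<and> Q Y"
    if "\<exists>Y1\<in>S. \<forall>Y\<in>S. Y \<le> Y1 \<longrightarrow> P Y" "\<exists>Y2\<in>S. \<forall>Y\<in>S. Y \<le> Y2 \<longrightarrow> Q Y" for P Q
  proof -
    from that(1) obtain Y1 where 1: "Y1 \<in> S" "\<forall>Y\<in>S. Y \<le> Y1 \<longrightarrow> P Y" by blast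
    from that(2) obtain Y2 where 2: "Y2 \<in> S" "\<forall>Y\<in>S. Y \<le> Y2 \<longrightarrow> Q Y" by blast
    show ?thesis
    proof (cases "Y1 \<le> Y2")
      case True then show ?thesis using 1 2 by (meson order_trans)
    next
      case False then have "Y2 \<le> Y1" using ch 1 2 by blast
      then show ?thesis using 1 2 by (meson order_trans)
    qed
  qed
  obtain Z where Z: "Z \<in> S" using ne by blast
  show "qfree \<psi> \<Longrightarrow> ?thesis"
  proof (induction \<psi>)
    case (RVar i ts)
    let ?as = "map (eval (fst (snd M)) e) ts"
    show ?case
    proof (cases "\<forall>Y\<in>S. ?as \<in> Y i")
      case True then show ?thesis using Z by (auto simp: Inf_apply)
    next
      case False
      then obtain Y1 where "Y1 \<in> S" "?as \<notin> Y1 i" by blast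
      then show ?thesis by (auto simp: Inf_apply le_fun_def)
    qed
  next
    case (Neg A) then show ?case by simp
  next
    case (Conj A B)
    have "\<exists>Y0\<in>S. \<forall>Y\<in>S. Y \<le> Y0 \<longrightarrow> (sat M Y e A = sat M (Inf S) e A) \<and> (sat M Y e B = sat M (Inf S) e B)"
    proof -
      have q: "qfree A" "qfree B" using Conj.prems by simp_all
      show ?thesis using comb[OF Conj.IH(1)[OF q(1)] Conj.IH(2)[OF q(2)]] by blast
    qed
    then show ?case by (simp only: sat.simps) blast
  next
    case (Disj A B)
    have "\<exists>Y0\<in>S. \<forall>Y\<in>S. Y \<le> Y0 \<longrightarrow> (sat M Y e A = sat M (Inf S) e A) \<and> (sat M Y e B = sat M (Inf S) e B)"
    proof -
      have q: "qfree A" "qfree B" using Disj.prems by simp_all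
      show ?thesis using comb[OF Disj.IH(1)[OF q(1)] Disj.IH(2)[OF q(2)]] by blast
    qed
    then show ?case by (simp only: sat.simps) blast
  next
    case (Impl A B)
    have "\<exists>Y0\<in>S. \<forall>Y\<in>S. Y \<le> Y0 \<longrightarrow> (sat M Y e A = sat M (Inf S) e A) \<and> (sat M Y e B = sat M (Inf S) e B)"
    proof -
      have q: "qfree A" "qfree B" using Impl.prems by simp_all
      show ?thesis using comb[OF Impl.IH(1)[OF q(1)] Impl.IH(2)[OF q(2)]] by blast
    qed
    then show ?case by (simp only: sat.simps) blast
  qed (use Z in auto)
qed

lemma clause_inf:
  fixes S :: "(nat \<Rightarrow> 'a list set) set"
  assumes ne: "S \<noteq> {}" and ch: "\<forall>Y\<in>S. \<forall>Z\<in>S. Y \<le> Z \<or> Z \<le> Y" and q: "qfree \<psi>"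
  shows "\<forall>Y\<in>S. sat M Y e (foralls xs (Impl \<psi> (conjs (map (\<lambda>(i, ts). RVar i ts) hs)))) \<Longrightarrow>
     sat M (Inf S) e (foralls xs (Impl \<psi> (conjs (map (\<lambda>(i, ts). RVar i ts) hs))))"
proof (induction xs arbitrary: e)
  case Nil
  show ?case
  proof (simp only: foralls.simps sat.simps, intro impI)
    assume si: "sat M (Inf S) e \<psi>"
    obtain Y0 where Y0: "Y0 \<in> S" "\<forall>Y\<in>S. Y \<le> Y0 \<longrightarrow> (sat M Y e \<psi> = sat M (Inf S) e \<psi>)"
      using stab[OF ne ch q] by blast
    have h0: "sat M Y0 e (conjs (map (\<lambda>(i, ts). RVar i ts) hs))"
      using Nil Y0 si by auto
    have "\<forall>Y\<in>S. \<forall>(i,ts)\<in>set hs. map (eval (fst (snd M)) e) ts \<in> Y i"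
    proof (intro ballI)
      fix Y p assume Y: "Y \<in> S" and p: "p \<in> set hs"
      show "case p of (i,ts) \<Rightarrow> map (eval (fst (snd M)) e) ts \<in> Y i"
      proof (cases "Y \<le> Y0")
        case True
        then have "sat M Y e (conjs (map (\<lambda>(i, ts). RVar i ts) hs))"
          using Nil Y Y0 si by auto
        then show ?thesis using p unfolding sat_heads by auto
      next
        case False
        then have "Y0 \<le> Y" using ch Y Y0 by blast
        then show ?thesis using h0 p unfolding sat_heads by (cases p) (auto simp: le_fun_def subset_iff)
      qed
    qed
    then show "sat M (Inf S) e (conjs (map (\<lambda>(i, ts). RVar i ts) hs))"
      unfolding sat_heads by (auto simp: Inf_apply)
  qed
next
  case (Cons x xs)
  show ?case
  proof (simp only: foralls.simps sat.simps, intro ballI)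
    fix a assume a: "a \<in> fst M"
    show "sat M (Inf S) (e(x := a)) (foralls xs (Impl \<psi> (conjs (map (\<lambda>(i, ts). RVar i ts) hs))))"
    proof (rule Cons.IH)
      have "\<forall>Y\<in>S. \<forall>a\<in>fst M. sat M Y (e(x:=a)) (foralls xs (Impl \<psi> (conjs (map (\<lambda>(i, ts). RVar i ts) hs))))"
        using Cons.prems by (simp only: foralls.simps sat.simps)
      then show "\<forall>Y\<in>S. sat M Y (e(x:=a)) (foralls xs (Impl \<psi> (conjs (map (\<lambda>(i, ts). RVar i ts) hs))))"
        using a by blast
    qed
  qed
qed

lemma models_inf:
  fixes S :: "(nat \<Rightarrow> 'a list set) set"
  assumes struct: "is_structure fa (D, FI, PI)"
    and std: "standard fa pa \<phi> TYPE('a)"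
    and ne: "S \<noteq> {}" and ch: "\<forall>Y\<in>S. \<forall>Z\<in>S. Y \<le> Z \<or> Z \<le> Y"
    and all: "\<forall>Y\<in>S. models (D, FI, PI) Y \<phi>"
  shows "models (D, FI, PI) (Inf S) \<phi>"
  unfolding models_def
proof (intro allI impI)
  fix e :: "nat \<Rightarrow> 'a" assume e: "\<forall>x. e x \<in> fst (D, FI, PI)"
  obtain cs where cs: "\<forall>c\<in>set cs. std_clause fa pa c"
    and eq: "equivalent fa \<phi> (conjs (map clause_fm cs)) TYPE('a)"
    using std unfolding standard_def by blast
  have EQ: "sat (D, FI, PI) X e \<phi> = sat (D, FI, PI) X e (conjs (map clause_fm cs))" for X
    using eq struct e unfolding equivalent_def by blast
  have "sat (D, FI, PI) (Inf S) e (clause_fm c)" if c: "c \<in> set cs" for c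
  proof -
    obtain xs \<psi> hs where cdef: "c = (xs, \<psi>, hs)" by (cases c) auto
    have q: "qfree \<psi>" using cs c cdef unfolding std_clause_def by auto
    have "\<forall>Y\<in>S. sat (D, FI, PI) Y e (clause_fm c)"
    proof
      fix Y assume "Y \<in> S"
      then have "sat (D, FI, PI) Y e \<phi>" using all e unfolding models_def by blast
      then show "sat (D, FI, PI) Y e (clause_fm c)" using EQ c by (simp add: sat_conjs)
    qed
    then show ?thesis unfolding cdef clause_fm_def
      using clause_inf[OF ne ch q] by auto
  qed
  then show "sat (D, FI, PI) (Inf S) e \<phi>" using EQ by (auto simp: sat_conjs)
qed

lemma gfp_post:
  assumes "monotone_op U F"
  shows "gfp_on U F \<subseteq> U" "gfp_on U F \<subseteq> F (gfp_on U F)"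
proof -
  show g: "gfp_on U F \<subseteq> U" unfolding gfp_on_def by auto
  show "gfp_on U F \<subseteq> F (gfp_on U F)"
  proof
    fix a assume "a \<in> gfp_on U F"
    then obtain X where X: "X \<subseteq> U" "X \<subseteq> F X" "a \<in> X" unfolding gfp_on_def by auto
    have "X \<subseteq> gfp_on U F" using X unfolding gfp_on_def by auto
    then have "F X \<subseteq> F (gfp_on U F)" using assms g unfolding monotone_op_def by blast
    then show "a \<in> F (gfp_on U F)" using X by blast
  qed
qed

lemma gfp_greatest: "X \<subseteq> U \<Longrightarrow> X \<subseteq> F X \<Longrightarrow> X \<subseteq> gfp_on U F"
  unfolding gfp_on_def by auto

theorem theorem4p29:
  fixes fa :: "'f \<Rightarrow> nat" and pa :: "'p \<Rightarrow> nat"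
    and D :: "'a set" and FI :: "'f \<Rightarrow> 'a list \<Rightarrow> 'a" and PI :: "'p \<Rightarrow> 'a list \<Rightarrow> bool"
    and \<phi> :: "('f, 'p) fm" and m :: nat and ra :: "nat \<Rightarrow> nat"
    and F :: "nat \<Rightarrow> 'a list set \<Rightarrow> 'a list set"
  assumes struct: "is_structure fa (D, FI, PI)"
    and wf: "wf_fm fa pa \<phi>"
    and std: "standard fa pa \<phi> TYPE('a)"
    and sentence: "fv \<phi> = {}"
    and rvars: "rvars_ok m ra \<phi>"
    and mono: "\<forall>i<m. monotone_op (tuples D (ra i)) (F i)"
    and step: "\<forall>Y. approx D m ra F Y \<longrightarrow> models (D, FI, PI) Y \<phi> \<longrightarrow>
                   models (D, FI, PI) (approx_succ m F Y) \<phi>"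
  shows "(\<forall>Y. approx D m ra F Y \<longrightarrow> models (D, FI, PI) Y \<phi>) \<and>
         models (D, FI, PI) (coinductive_tuple D m ra F) \<phi>"
proof -
  define tp where "tp = approx_top D m ra"
  define G where "G = approx_succ m F"
  have Gmono: "G X \<le> G Y" if "X \<le> Y" "Y \<le> tp" for X Y
    unfolding le_fun_def
  proof
    fix i
    show "G X i \<subseteq> G Y i"
    proof (cases "i < m")
      case True
      have "X i \<subseteq> Y i" using that(1) by (simp add: le_fun_def)
      moreover have "Y i \<subseteq> tuples D (ra i)" using that(2) True le_funD[of Y tp i]
        by (simp add: tp_def approx_top_def)
      ultimately have "X i \<subseteq> Y i" "Y i \<subseteq> tuples D (ra i)" by auto
      then show ?thesis using mono True unfolding G_def approx_succ_def monotone_op_def by simp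
    qed (simp add: G_def approx_succ_def)
  qed
  have Gt: "G X \<le> tp" if "X \<le> tp" for X
    unfolding le_fun_def
  proof
    fix i
    show "G X i \<subseteq> tp i"
    proof (cases "i < m")
      case True
      have "X i \<subseteq> tuples D (ra i)" using that True le_funD[of X tp i]
        by (simp add: tp_def approx_top_def)
      then show ?thesis using mono True unfolding G_def approx_succ_def monotone_op_def tp_def approx_top_def by simp
    qed (simp add: G_def approx_succ_def tp_def approx_top_def)
  qed
  have limeq: "(\<lambda>i. if i < m then tuples D (ra i) \<inter> (\<Inter>Y\<in>S. Y i) else {}) = inf tp (Inf S)"
    for S :: "(nat \<Rightarrow> 'a list set) set"
    by (rule ext) (auto simp: tp_def approx_top_def Inf_apply)
  have totwr: "twr tp G Y" if "approx D m ra F Y" for Y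
    using that
  proof (induction rule: approx.induct)
    case approx_zero then show ?case using twr_top tp_def by metis
  next
    case (approx_step Y) then show ?case using twr_step G_def by metis
  next
    case (approx_limit S)
    then show ?case unfolding limeq by (auto intro: twr_lim)
  qed
  have below: "Y \<le> tp" if "approx D m ra F Y" for Y
    using twr_defl[OF Gmono Gt totwr[OF that]] by blast
  have chain: "Y \<le> Z \<or> Z \<le> Y" if "approx D m ra F Y" "approx D m ra F Z" for Y Z
    using twr_chain[OF Gmono Gt totwr[OF that(1)] totwr[OF that(2)]] by blast
  have part1: "models (D, FI, PI) Y \<phi>" if "approx D m ra F Y" for Y
    using that
  proof (induction rule: approx.induct)
    case approx_zero then show ?case using models_top[OF struct wf std rvars] by simp
  next
    case (approx_step Y) then show ?case using step by blast
  next
    case (approx_limit S)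
    show ?case
    proof (cases "S = {}")
      case True
      then show ?thesis using models_top[OF struct wf std rvars]
        unfolding limeq tp_def by simp
    next
      case False
      have SA: "\<forall>Y\<in>S. approx D m ra F Y \<and> models (D, FI, PI) Y \<phi>" using approx_limit by blast
      obtain Y1 where Y1: "Y1 \<in> S" using False by blast
      have "Inf S \<le> tp" using Y1 SA below by (meson Inf_lower order_trans)
      then have "inf tp (Inf S) = Inf S" by (simp add: inf.absorb2)
      moreover have "models (D, FI, PI) (Inf S) \<phi>"
      proof (rule models_inf[OF struct std False])
        show "\<forall>Y\<in>S. \<forall>Z\<in>S. Y \<le> Z \<or> Z \<le> Y" using SA chain by simp
        show "\<forall>Y\<in>S. models (D, FI, PI) Y \<phi>" using SA by simp
      qed
      ultimately show ?thesis unfolding limeq by simp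
    qed
  qed
  define L where "L = (\<lambda>i. if i < m then tuples D (ra i) \<inter> (\<Inter>Y\<in>{Y. approx D m ra F Y}. Y i) else {})"
  have aL: "approx D m ra F L" unfolding L_def by (rule approx_limit) auto
  have aGL: "approx D m ra F (G L)" using approx_step[OF aL] G_def by simp
  have gfp_below: "\<forall>i<m. gfp_on (tuples D (ra i)) (F i) \<subseteq> Y i" if "approx D m ra F Y" for Y
    using that
  proof (induction rule: approx.induct)
    case approx_zero then show ?case by (auto simp: approx_top_def gfp_on_def)
  next
    case (approx_step Y)
    show ?case
    proof (intro allI impI)
      fix i assume i: "i < m"
      have Yt: "Y i \<subseteq> tuples D (ra i)" using le_funD[OF below[OF approx_step.hyps], of i] i
        by (simp add: tp_def approx_top_def)
      have "gfp_on (tuples D (ra i)) (F i) \<subseteq> F i (gfp_on (tuples D (ra i)) (F i))"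
        using gfp_post mono i by blast
      also have "\<dots> \<subseteq> F i (Y i)" using mono i approx_step.IH Yt unfolding monotone_op_def by blast
      finally show "gfp_on (tuples D (ra i)) (F i) \<subseteq> approx_succ m F Y i"
        using i by (simp add: approx_succ_def)
    qed
  next
    case (approx_limit S)
    show ?case
    proof (intro allI impI subsetI)
      fix i x assume i: "i < m" and x: "x \<in> gfp_on (tuples D (ra i)) (F i)"
      have "x \<in> tuples D (ra i)" using x unfolding gfp_on_def by blast
      moreover have "\<forall>Y\<in>S. x \<in> Y i" using approx_limit i x by blast
      ultimately show "x \<in> (if i < m then tuples D (ra i) \<inter> (\<Inter>Y\<in>S. Y i) else {})"
        using i by simp
    qed
  qed
  have "coinductive_tuple D m ra F = L"
  proof (rule ext)
    fix i
    show "coinductive_tuple D m ra F i = L i"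
    proof (cases "i < m")
      case False then show ?thesis by (simp add: coinductive_tuple_def L_def)
    next
      case True
      have "L i \<subseteq> G L i" using aGL True unfolding L_def by auto
      then have "L i \<subseteq> F i (L i)" using True by (simp add: G_def approx_succ_def)
      then have 1: "L i \<subseteq> gfp_on (tuples D (ra i)) (F i)"
        by (rule gfp_greatest[rotated]) (use True in \<open>simp add: L_def\<close>)
      have 2: "gfp_on (tuples D (ra i)) (F i) \<subseteq> L i"
      proof
        fix x assume x: "x \<in> gfp_on (tuples D (ra i)) (F i)"
        have "x \<in> tuples D (ra i)" using x unfolding gfp_on_def by blast
        moreover have "\<forall>Y. approx D m ra F Y \<longrightarrow> x \<in> Y i"
        proof (intro allI impI)
          fix Y assume "approx D m ra F Y"
          from gfp_below[OF this] True x show "x \<in> Y i" by blast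
        qed
        ultimately have "x \<in> tuples D (ra i) \<inter> (\<Inter>Y\<in>{Y. approx D m ra F Y}. Y i)" by blast
        then show "x \<in> L i" using True unfolding L_def by (simp only: if_True)
      qed
      have c: "coinductive_tuple D m ra F i = gfp_on (tuples D (ra i)) (F i)"
        using True by (simp add: coinductive_tuple_def)
      show ?thesis unfolding c by (rule equalityI[OF 2 1])
    qed
  qed
  then show ?thesis using part1 aL by simp
qed

end
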